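(* Let $c>2$, $m\ge3$ and $p\le1/2$. If $mp\ge c$, then for every $q\in[0,1]$, \[ \ell_1(\mathrm{Bin}(m,p),\mathrm{Bin}(m,q))\ge\frac1{350}\min\left(\frac{\sqrt m\,|p-q|}{\sqrt{p(1-p)}},1\right). \]
   Context: $m$ is an integer, $p\in[0,1]$, and $\ell_1(P,Q)=\sum_x|P(x)-Q(x)|$. *)

theory Defs
  imports "HOL-Probability.Probability"
begin

text \<open>l1 distance between two distributions on the naturals, both supported on {0..m}.\<close>
definition l1_bin :: "nat \<Rightarrow> real \<Rightarrow> real \<Rightarrow> real" where
  "l1_bin m p q = (\<Sum>k\<le>m. \<bar>pmf (binomial_pmf m p) k - pmf (binomial_pmf m q) k\<bar>)"

end

theory Submission
  imports Defs
begin

definition bw :: "nat \<Rightarrow> real \<Rightarrow> nat \<Rightarrow> real" where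
  "bw m r k = real (m choose k) * r ^ k * (1 - r) ^ (m - k)"

definition bE :: "nat \<Rightarrow> real \<Rightarrow> (nat \<Rightarrow> real) \<Rightarrow> real" where
  "bE m r f = (\<Sum>k\<le>m. bw m r k * f k)"

lemma bw_nonneg: "0 \<le> r \<Longrightarrow> r \<le> 1 \<Longrightarrow> 0 \<le> bw m r k"
  unfolding bw_def by simp

lemma bw_gt: "k > m \<Longrightarrow> bw m r k = 0"
  unfolding bw_def by simp

lemma bw_Suc_Suc: "bw (Suc m) r (Suc k) = r * bw m r k + (1 - r) * bw m r (Suc k)"
proof (cases "k < m")
  case True
  then have e: "m - k = Suc (m - Suc k)" by simp
  show ?thesis unfolding bw_def by (simp add: e algebra_simps)
next
  case False
  then show ?thesis unfolding bw_def by (cases "k = m") (auto simp: binomial_eq_0)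
qed

lemma bw_Suc_0: "bw (Suc m) r 0 = (1 - r) * bw m r 0"
  unfolding bw_def by simp

lemma bE_shift: "bE m r f = bw m r 0 * f 0 + (\<Sum>k\<le>m. bw m r (Suc k) * f (Suc k))"
proof -
  have "bE m r f = (\<Sum>k\<le>Suc m. bw m r k * f k)"
    unfolding bE_def by (simp add: bw_gt)
  also have "\<dots> = bw m r 0 * f 0 + (\<Sum>k\<le>m. bw m r (Suc k) * f (Suc k))"
    by (subst sum.atMost_Suc_shift) simp
  finally show ?thesis .
qed

lemma bE_Suc: "bE (Suc m) r f = r * bE m r (\<lambda>k. f (Suc k)) + (1 - r) * bE m r f"
proof -
  have "bE (Suc m) r f = bw (Suc m) r 0 * f 0 + (\<Sum>k\<le>Suc m. bw (Suc m) r (Suc k) * f (Suc k))"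
    by (rule bE_shift)
  also have "(\<Sum>k\<le>Suc m. bw (Suc m) r (Suc k) * f (Suc k)) = (\<Sum>k\<le>m. bw (Suc m) r (Suc k) * f (Suc k))"
    by (simp add: bw_gt)
  also have "\<dots> = r * (\<Sum>k\<le>m. bw m r k * f (Suc k)) + (1 - r) * (\<Sum>k\<le>m. bw m r (Suc k) * f (Suc k))"
  proof -
    have "(\<Sum>k\<le>m. bw (Suc m) r (Suc k) * f (Suc k)) = (\<Sum>k\<le>m. r * (bw m r k * f (Suc k)) + (1 - r) * (bw m r (Suc k) * f (Suc k)))"
      by (rule sum.cong) (simp_all add: bw_Suc_Suc algebra_simps)
    then show ?thesis by (simp only: sum.distrib sum_distrib_left)
  qed
  finally have X: "bE (Suc m) r f = bw (Suc m) r 0 * f 0 + (r * (\<Sum>k\<le>m. bw m r k * f (Suc k)) + (1 - r) * (\<Sum>k\<le>m. bw m r (Suc k) * f (Suc k)))" .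
  have A: "bE m r (\<lambda>k. f (Suc k)) = (\<Sum>k\<le>m. bw m r k * f (Suc k))" by (simp add: bE_def)
  show ?thesis unfolding X A bE_shift[of m r f] bw_Suc_0 by (simp add: algebra_simps)
qed

lemma bE_add: "bE m r (\<lambda>k. f k + g k) = bE m r f + bE m r g"
  unfolding bE_def by (simp add: algebra_simps sum.distrib)
lemma bE_cmult: "bE m r (\<lambda>k. c * f k) = c * bE m r f"
  unfolding bE_def by (simp add: algebra_simps sum_distrib_left)
lemma bE_mono: "0 \<le> r \<Longrightarrow> r \<le> 1 \<Longrightarrow> (\<And>k. k \<le> m \<Longrightarrow> f k \<le> g k) \<Longrightarrow> bE m r f \<le> bE m r g"
  unfolding bE_def by (intro sum_mono mult_left_mono) (auto simp: bw_nonneg)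

lemma bE_one: "bE m r (\<lambda>_. 1) = 1"
proof (induction m)
  case 0 then show ?case by (simp add: bE_def bw_def)
next
  case (Suc m) then show ?case by (simp add: bE_Suc)
qed

lemma bE_const: "bE m r (\<lambda>_. c) = c"
  using bE_cmult[of m r c "\<lambda>_. 1"] by (simp add: bE_one)

definition Zc :: "nat \<Rightarrow> real \<Rightarrow> nat \<Rightarrow> real" where
  "Zc m r k = real k - real m * r"

lemma Zc_Suc1: "Zc (Suc m) r (Suc k) = Zc m r k + (1 - r)"
  unfolding Zc_def by (simp add: algebra_simps)
lemma Zc_Suc2: "Zc (Suc m) r k = Zc m r k + (- r)"
  unfolding Zc_def by (simp add: algebra_simps)

lemma Zc_Suc2': "Zc (Suc m) r = (\<lambda>k. Zc m r k + (- r))"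
  by (rule ext) (simp add: Zc_Suc2)

lemma bE_M1: "bE m r (Zc m r) = 0"
proof (induction m)
  case 0 then show ?case by (simp add: bE_def bw_def Zc_def)
next
  case (Suc m)
  have "bE (Suc m) r (Zc (Suc m) r) = r * bE m r (\<lambda>k. Zc m r k + (1 - r)) + (1 - r) * bE m r (\<lambda>k. Zc m r k + (- r))"
    by (simp only: bE_Suc Zc_Suc1) (simp only: Zc_Suc2')
  also have "\<dots> = 0" by (simp only: bE_add bE_const Suc) (simp add: algebra_simps)
  finally show ?case .
qed

lemma bE_shift2: "bE m r (\<lambda>k. (Zc m r k + a)^2) = bE m r (\<lambda>k. (Zc m r k)^2) + a^2"
proof -
  have "(\<lambda>k. (Zc m r k + a)^2) = (\<lambda>k. (Zc m r k)^2 + ((2*a) * Zc m r k + a^2))"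
    by (rule ext) (simp add: power2_eq_square algebra_simps)
  then show ?thesis by (simp only: bE_add bE_cmult bE_const bE_M1)
qed

lemma bE_M2: "bE m r (\<lambda>k. (Zc m r k)^2) = real m * r * (1 - r)"
proof (induction m)
  case 0 then show ?case by (simp add: bE_def bw_def Zc_def)
next
  case (Suc m)
  have "bE (Suc m) r (\<lambda>k. (Zc (Suc m) r k)^2) = r * bE m r (\<lambda>k. (Zc m r k + (1 - r))^2) + (1 - r) * bE m r (\<lambda>k. (Zc m r k + (- r))^2)"
    by (simp only: bE_Suc Zc_Suc1) (simp only: Zc_Suc2)
  also have "\<dots> = real (Suc m) * r * (1 - r)" by (simp only: bE_shift2 Suc) (simp add: algebra_simps power2_eq_square)
  finally show ?case .
qed

lemma bE_shift4: "bE m r (\<lambda>k. (Zc m r k + a)^4) = bE m r (\<lambda>k. (Zc m r k)^4) + 4*a * bE m r (\<lambda>k. (Zc m r k)^3) + 6*a^2 * (real m * r * (1 - r)) + a^4"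
proof -
  have "(\<lambda>k. (Zc m r k + a)^4) = (\<lambda>k. (Zc m r k)^4 + ((4*a) * (Zc m r k)^3 + ((6*a^2) * (Zc m r k)^2 + ((4*a^3) * Zc m r k + a^4))))"
    by (rule ext) (simp add: power_numeral_reduce algebra_simps)
  then show ?thesis by (simp only: bE_add bE_cmult bE_const bE_M1 bE_M2)
qed

lemma bE_M4: "bE m r (\<lambda>k. (Zc m r k)^4) = 3 * (real m)^2 * (r*(1-r))^2 - 6 * real m * (r*(1-r))^2 + real m * (r * (1-r))"
proof (induction m)
  case 0 then show ?case by (simp add: bE_def bw_def Zc_def)
next
  case (Suc m)
  have "bE (Suc m) r (\<lambda>k. (Zc (Suc m) r k)^4) = r * bE m r (\<lambda>k. (Zc m r k + (1 - r))^4) + (1 - r) * bE m r (\<lambda>k. (Zc m r k + (- r))^4)"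
    by (simp only: bE_Suc Zc_Suc1) (simp only: Zc_Suc2)
  also have "\<dots> = 3 * (real (Suc m))^2 * (r*(1-r))^2 - 6 * real (Suc m) * (r*(1-r))^2 + real (Suc m) * (r * (1-r))"
    by (simp only: bE_shift4 Suc) (simp add: algebra_simps power_numeral_reduce)
  finally show ?case .
qed

lemma bE_mad:
  assumes r0: "0 \<le> r" and r1: "r \<le> 1" and V1: "real m * r * (1 - r) \<ge> 1"
  shows "bE m r (\<lambda>k. \<bar>Zc m r k\<bar>) \<ge> sqrt (real m * r * (1 - r)) / 2"
proof -
  define V where "V = real m * r * (1 - r)"
  define sq where "sq = sqrt V"
  have V1': "V \<ge> 1" using V1 by (simp add: V_def)
  have s0: "sq > 0" using V1' by (simp add: sq_def)
  have ss: "sq * sq = V" using V1' by (simp add: sq_def)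
  have pw: "12 * V * (Zc m r k)^2 \<le> 16 * (V * sq) * \<bar>Zc m r k\<bar> + (Zc m r k)^4" for k
  proof -
    define z where "z = \<bar>Zc m r k\<bar>"
    have z0: "z \<ge> 0" by (simp add: z_def)
    have e1: "(Zc m r k)^2 = z^2" "(Zc m r k)^4 = z^4" by (simp_all add: z_def power_even_abs_numeral)
    have "0 \<le> z * ((z - 2 * sq)^2 * (z + 4 * sq))" using z0 s0 by simp
    also have "z * ((z - 2 * sq)^2 * (z + 4 * sq)) = z^4 - 12 * (sq * sq) * z^2 + 16 * (sq * sq) * sq * z"
      by (simp add: power2_eq_square power_numeral_reduce algebra_simps)
    finally show ?thesis unfolding e1 ss by (simp add: z_def algebra_simps)
  qed
  have "bE m r (\<lambda>k. (12 * V) * (Zc m r k)^2) \<le> bE m r (\<lambda>k. (16 * (V * sq)) * \<bar>Zc m r k\<bar> + (Zc m r k)^4)"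
    by (rule bE_mono[OF r0 r1]) (use pw in auto)
  then have "12 * V * V \<le> 16 * (V * sq) * bE m r (\<lambda>k. \<bar>Zc m r k\<bar>) + (3 * V^2 - 6 * real m * (r*(1-r))^2 + V)"
    by (simp only: bE_add bE_cmult bE_M2 bE_M4) (simp add: V_def power2_eq_square algebra_simps)
  moreover have "6 * real m * (r*(1-r))^2 \<ge> 0" by simp
  moreover have "V \<le> V * V" using V1' by simp
  moreover have "V^2 = V * V" by (simp add: power2_eq_square)
  ultimately have "8 * (V * V) \<le> 16 * (V * sq) * bE m r (\<lambda>k. \<bar>Zc m r k\<bar>)"
    by linarith
  then have "8 * (V * (sq * sq)) \<le> 8 * (V * sq) * (2 * bE m r (\<lambda>k. \<bar>Zc m r k\<bar>))"
    by (simp add: ss algebra_simps)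
  then have "sq \<le> 2 * bE m r (\<lambda>k. \<bar>Zc m r k\<bar>)"
    using s0 V1' by (simp add: mult.assoc[symmetric] mult_le_cancel_left_pos)
  then show ?thesis by (simp add: sq_def V_def)
qed

lemma bE_pos_part: "bE m r (\<lambda>k. max (Zc m r k) 0) = bE m r (\<lambda>k. \<bar>Zc m r k\<bar>) / 2"
proof -
  have "(\<lambda>k. max (Zc m r k) 0) = (\<lambda>k. (1/2) * \<bar>Zc m r k\<bar> + (1/2) * Zc m r k)"
    by (rule ext) auto
  then show ?thesis by (simp only: bE_add bE_cmult bE_M1)
qed

lemma bE_param_mono:
  assumes "mono f" "0 \<le> r" "r \<le> r'" "r' \<le> 1"
  shows "bE m r f \<le> bE m r' f"
  using assms(1)
proof (induction m arbitrary: f)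
  case 0 then show ?case by (simp add: bE_def bw_def)
next
  case (Suc m)
  have mS: "mono (\<lambda>k. f (Suc k))" using Suc.prems by (auto simp: mono_def)
  have r0': "0 \<le> r'" "r' \<le> 1" "r \<le> 1" using assms by auto
  have a: "bE m r (\<lambda>k. f (Suc k)) \<le> bE m r' (\<lambda>k. f (Suc k))" by (rule Suc.IH[OF mS])
  have b: "bE m r f \<le> bE m r' f" by (rule Suc.IH[OF Suc.prems])
  have c: "bE m r' f \<le> bE m r' (\<lambda>k. f (Suc k))"
    by (rule bE_mono[OF r0'(1,2)]) (use Suc.prems in \<open>auto simp: mono_def\<close>)
  have "bE (Suc m) r f = r * bE m r (\<lambda>k. f (Suc k)) + (1 - r) * bE m r f" by (rule bE_Suc)
  also have "\<dots> \<le> r * bE m r' (\<lambda>k. f (Suc k)) + (1 - r) * bE m r' f"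
    using a b assms by (intro add_mono mult_left_mono) auto
  also have "\<dots> \<le> r' * bE m r' (\<lambda>k. f (Suc k)) + (1 - r') * bE m r' f"
  proof -
    have "(r' - r) * (bE m r' (\<lambda>k. f (Suc k)) - bE m r' f) \<ge> 0" using c assms by simp
    then show ?thesis by (simp add: algebra_simps)
  qed
  also have "\<dots> = bE (Suc m) r' f" by (rule bE_Suc[symmetric])
  finally show ?case .
qed

lemma pow_exp_ln: "(x::real) > 0 \<Longrightarrow> x ^ n = exp (real n * ln x)"
  by (simp add: exp_of_nat_mult)

lemma step1:
  assumes p0: "0 < p" and p1: "p < 1" and V1: "real m * p * (1 - p) \<ge> 1"
    and q0: "p < q" and q1: "q < 1"
    and small: "real m * (q - p) \<le> sqrt (real m * p * (1 - p)) / 24"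
  shows "(\<Sum>k\<le>m. max (bw m q k - bw m p k) 0) \<ge> (real m * (q - p) / sqrt (real m * p * (1 - p))) / 12"
proof -
  define V where "V = real m * p * (1 - p)"
  define d where "d = q - p"
  define t where "t = real m * d / sqrt V"
  define a where "a = ln q - ln p"
  define b where "b = ln (1 - q) - ln (1 - p)"
  define sl where "sl = a - b"
  define K where "K = - (p * a + (1 - p) * b)"
  have V1': "V \<ge> 1" using V1 by (simp add: V_def)
  have sV: "sqrt V > 0" "sqrt V * sqrt V = V" using V1' by auto
  have sVle: "sqrt V \<le> V"
  proof -
    have "1 \<le> sqrt V" using V1' by simp
    then have "sqrt V * 1 \<le> sqrt V * sqrt V" using sV by (intro mult_left_mono) auto
    then show ?thesis using sV by simp
  qed
  have m0: "real m > 0" using V1' p0 p1 by (cases "m = 0") (auto simp: V_def)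
  have d0: "d > 0" using q0 by (simp add: d_def)
  have smalld: "real m * d \<le> sqrt V / 24" using small by (simp add: d_def V_def)
  have t0: "t \<ge> 0" using d0 m0 sV by (simp add: t_def)
  have tsmall: "t \<le> 1/24" using smalld sV by (simp add: t_def field_simps)
  have Vle1: "V \<le> real m * p" using p0 p1 m0 by (simp add: V_def mult_left_le)
  have Vle2: "V \<le> real m * (1 - p)" using p0 p1 m0 by (simp add: V_def mult_left_le mult.commute mult.left_commute)
  have "real m * (24 * d) \<le> real m * p" using smalld sVle Vle1 by simp
  then have dp: "d \<le> p / 24" using m0 by (simp add: mult_le_cancel_left_pos)
  have "real m * (24 * d) \<le> real m * (1 - p)" using smalld sVle Vle2 by simp
  then have dp2: "d \<le> (1 - p) / 24" using m0 by (simp add: mult_le_cancel_left_pos)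
  have qeq: "q = p + d" by (simp add: d_def)
  have la: "a \<ge> d / q" and la2: "- a \<le> p / q - 1"
  proof -
    have "ln (p / q) \<le> p / q - 1" using p0 q0 by (intro ln_le_minus_one) simp
    moreover have "ln (p / q) = - a" using p0 q0 by (simp add: a_def ln_div)
    moreover have "p / q - 1 = - (d / q)" using p0 q0 by (simp add: d_def field_simps)
    ultimately show "a \<ge> d / q" "- a \<le> p / q - 1" by linarith+
  qed
  have lb: "b \<le> - (d / (1 - p))" and lb2: "- b \<le> (1 - p) / (1 - q) - 1" and lb3: "b \<le> (1 - q) / (1 - p) - 1"
  proof -
    have "ln ((1 - q) / (1 - p)) \<le> (1 - q) / (1 - p) - 1" using p1 q1 by (intro ln_le_minus_one) simp
    moreover have "ln ((1 - q) / (1 - p)) = b" using p1 q1 by (simp add: b_def ln_div)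
    moreover have "(1 - q) / (1 - p) - 1 = - (d / (1 - p))" using p1 by (simp add: d_def field_simps)
    ultimately show "b \<le> - (d / (1 - p))" "b \<le> (1 - q) / (1 - p) - 1" by linarith+
    have "ln ((1 - p) / (1 - q)) \<le> (1 - p) / (1 - q) - 1" using p1 q1 by (intro ln_le_minus_one) simp
    moreover have "ln ((1 - p) / (1 - q)) = - b" using p1 q1 by (simp add: b_def ln_div)
    ultimately show "- b \<le> (1 - p) / (1 - q) - 1" by linarith
  qed
  have K0: "K \<ge> 0"
  proof -
    have "ln (q / p) \<le> q / p - 1" using p0 q0 by (intro ln_le_minus_one) simp
    moreover have "ln (q / p) = a" using p0 q0 by (simp add: a_def ln_div)
    ultimately have "p * a \<le> p * (q / p - 1)" using p0 by (intro mult_left_mono) auto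
    moreover have "(1 - p) * b \<le> (1 - p) * ((1 - q) / (1 - p) - 1)" using lb3 p1 by (intro mult_left_mono) auto
    moreover have "p * (q / p - 1) + (1 - p) * ((1 - q) / (1 - p) - 1) = 0" using p0 p1 by (simp add: field_simps)
    ultimately show ?thesis by (simp add: K_def)
  qed
  have Kle: "K \<le> 2 * d^2 / (p * (1 - p))"
  proof -
    have "K \<le> p * (p / q - 1) + (1 - p) * ((1 - p) / (1 - q) - 1)"
      unfolding K_def using la2 lb2 p0 p1 mult_left_mono[OF la2, of p] mult_left_mono[OF lb2, of "1-p"] by simp
    also have "\<dots> = d^2 / (q * (1 - q))" using p0 q0 q1 by (simp add: d_def field_simps power2_eq_square)
    also have "\<dots> \<le> d^2 / (p * (1 - p) / 2)"
    proof (rule divide_left_mono)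
      have h: "1 - q \<ge> (1 - p) / 2" using dp2 qeq p1 by simp
      have "q * (1 - q) \<ge> p * ((1 - p) / 2)" by (rule mult_mono) (use h q0 p0 p1 in simp)+
      then show "p * (1 - p) / 2 \<le> q * (1 - q)" by simp
      show "0 \<le> d^2" by simp
      show "0 < q * (1 - q) * (p * (1 - p) / 2)" using p0 p1 q0 q1 by simp
    qed
    finally show ?thesis by (simp add: mult.commute)
  qed
  have slb: "sl \<ge> (2/3) * d / (p * (1 - p))"
  proof -
    have "q \<le> 3/2 * p" using dp qeq p0 by simp
    then have "d / q \<ge> d / (3/2 * p)" using d0 p0 q0 by (intro divide_left_mono) auto
    then have "sl \<ge> d / (3/2 * p) + d / (1 - p)" using la lb by (simp add: sl_def)
    moreover have "d / (3/2 * p) + d / (1 - p) \<ge> (2/3) * d / (p * (1 - p))"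
      using p0 p1 d0 by (simp add: field_simps)
    ultimately show ?thesis by linarith
  qed
  have "(2/3) * d / (p * (1 - p)) > 0" using d0 p0 p1 by simp
  then have sl0: "sl > 0" using slb by linarith
  have pw: "max (bw m q k - bw m p k) 0 \<ge> bw m p k * (sl * max (Zc m p k) 0 + (- (real m * K)))" if km: "k \<le> m" for k
  proof -
    define l where "l = real k * a + (real m - real k) * b"
    have e: "bw m q k = bw m p k * exp l"
    proof -
      have "bw m q k = real (m choose k) * exp (real k * ln q) * exp (real (m - k) * ln (1 - q))"
        unfolding bw_def using q0 p0 q1 by (simp add: pow_exp_ln)
      moreover have "bw m p k = real (m choose k) * exp (real k * ln p) * exp (real (m - k) * ln (1 - p))"
        unfolding bw_def using p0 p1 by (simp add: pow_exp_ln)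
      moreover have "exp (real k * ln q) * exp (real (m - k) * ln (1 - q)) = exp (real k * ln p) * exp (real (m - k) * ln (1 - p)) * exp l"
        unfolding l_def a_def b_def using km by (simp add: of_nat_diff algebra_simps flip: exp_add)
      ultimately show ?thesis by simp
    qed
    have P0: "bw m p k \<ge> 0" using p0 p1 by (intro bw_nonneg) auto
    have "bw m q k - bw m p k \<ge> bw m p k * l"
      using e P0 mult_left_mono[OF exp_ge_add_one_self[of l] P0] by (simp add: algebra_simps)
    then have "max (bw m q k - bw m p k) 0 \<ge> bw m p k * max l 0"
      using P0 by (auto simp: max_def mult_nonneg_nonneg)
    moreover have "l = sl * Zc m p k - real m * K"
      unfolding l_def sl_def K_def Zc_def by (simp add: algebra_simps)
    moreover have "max (sl * Zc m p k - real m * K) 0 \<ge> sl * max (Zc m p k) 0 + (- (real m * K))"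
    proof -
      have mK: "real m * K \<ge> 0" using K0 m0 by simp
      show ?thesis
      proof (cases "Zc m p k \<ge> 0")
        case True then show ?thesis by simp
      next
        case False then show ?thesis using mK by simp
      qed
    qed
    ultimately have "max (bw m q k - bw m p k) 0 \<ge> bw m p k * max (sl * Zc m p k - real m * K) 0" by simp
    also have "bw m p k * max (sl * Zc m p k - real m * K) 0 \<ge> bw m p k * (sl * max (Zc m p k) 0 + (- (real m * K)))"
      by (rule mult_left_mono) fact+
    finally show ?thesis .
  qed
  have "(\<Sum>k\<le>m. max (bw m q k - bw m p k) 0) \<ge> bE m p (\<lambda>k. sl * max (Zc m p k) 0 + (- (real m * K)))"
    unfolding bE_def by (rule sum_mono) (use pw in auto)
  also have "bE m p (\<lambda>k. sl * max (Zc m p k) 0 + (- (real m * K))) = sl * (bE m p (\<lambda>k. \<bar>Zc m p k\<bar>) / 2) - real m * K"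
    by (simp only: bE_add bE_cmult bE_const bE_pos_part)
  finally have S1: "(\<Sum>k\<le>m. max (bw m q k - bw m p k) 0) \<ge> sl * (bE m p (\<lambda>k. \<bar>Zc m p k\<bar>) / 2) - real m * K" .
  have mad: "bE m p (\<lambda>k. \<bar>Zc m p k\<bar>) \<ge> sqrt V / 2"
    using bE_mad[of p m] p0 p1 V1 by (simp add: V_def)
  have pV: "p * (1 - p) = (sqrt V * sqrt V) / real m" using m0 sV by (simp add: V_def)
  have T1: "sl * (bE m p (\<lambda>k. \<bar>Zc m p k\<bar>) / 2) \<ge> t / 6"
  proof -
    have "sl * (bE m p (\<lambda>k. \<bar>Zc m p k\<bar>) / 2) \<ge> ((2/3) * d / (p * (1 - p))) * (sqrt V / 4)"
      using mad slb sl0 sV by (intro mult_mono) (auto simp: divide_nonneg_nonneg)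
    also have "((2/3) * d / (p * (1 - p))) * (sqrt V / 4) = t / 6"
      unfolding pV t_def using sV m0 by (simp add: field_simps)
    finally show ?thesis .
  qed
  have T2: "real m * K \<le> 2 * t^2"
  proof -
    have "real m * K \<le> real m * (2 * d^2 / (p * (1 - p)))" by (rule mult_left_mono) (use Kle m0 in auto)
    also have "\<dots> = 2 * t^2" unfolding pV t_def using sV m0 by (simp add: field_simps power2_eq_square)
    finally show ?thesis .
  qed
  have "t * t \<le> t * (1/24)" using t0 tsmall by (intro mult_left_mono) auto
  then have "2 * t^2 \<le> t / 12" by (simp add: power2_eq_square)
  then have "(\<Sum>k\<le>m. max (bw m q k - bw m p k) 0) \<ge> t / 12" using S1 T1 T2 by linarith
  then show ?thesis by (simp add: t_def d_def V_def)
qed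

lemma bw_ratio:
  assumes "j < m"
  shows "bw m r (Suc j) * (real (Suc j) * (1 - r)) = bw m r j * (real (m - j) * r)"
proof -
  have c: "Suc j * (m choose Suc j) = (m - j) * (m choose j)"
    using binomial_absorption[of j m] binomial_absorb_comp[of m j] by simp
  have c': "real (Suc j) * real (m choose Suc j) = real (m - j) * real (m choose j)"
    using arg_cong[OF c, of real] by (simp only: of_nat_mult)
  have e: "m - j = Suc (m - Suc j)" using assms by simp
  have "bw m r (Suc j) * (real (Suc j) * (1 - r)) = (real (Suc j) * real (m choose Suc j)) * r ^ Suc j * (1 - r) ^ (m - j)"
    unfolding bw_def e by (simp add: algebra_simps)
  also have "\<dots> = bw m r j * (real (m - j) * r)"
    unfolding c' bw_def by (simp add: algebra_simps)
  finally show ?thesis .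
qed

lemma mlr_step:
  assumes p0: "0 < p" and q0: "p \<le> q" and q1: "q < 1" and j: "j < m"
    and lt: "bw m p j < bw m q j"
  shows "bw m p (Suc j) < bw m q (Suc j)"
proof -
  have p1: "p < 1" using q0 q1 by simp
  define A where "A = real (m - j) * p / (real (Suc j) * (1 - p))"
  define A' where "A' = real (m - j) * q / (real (Suc j) * (1 - q))"
  have eP: "bw m p (Suc j) = bw m p j * A"
  proof -
    have D: "real (Suc j) * (1 - p) \<noteq> 0" using p1 by simp
    have "bw m p (Suc j) = bw m p j * (real (m - j) * p) / (real (Suc j) * (1 - p))"
      using bw_ratio[OF j, of p] D by (simp add: eq_divide_eq)
    then show ?thesis unfolding A_def by simp
  qed
  have eQ: "bw m q (Suc j) = bw m q j * A'"
  proof -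
    have D: "real (Suc j) * (1 - q) \<noteq> 0" using q1 by simp
    have "bw m q (Suc j) = bw m q j * (real (m - j) * q) / (real (Suc j) * (1 - q))"
      using bw_ratio[OF j, of q] D by (simp add: eq_divide_eq)
    then show ?thesis unfolding A'_def by simp
  qed
  have A'0: "A' > 0" using j p0 q0 q1 by (simp add: A'_def)
  have pq: "p * (1 - q) \<le> q * (1 - p)" using q0 by (simp add: algebra_simps)
  have AA: "A \<le> A'"
  proof -
    have "p / (1 - p) \<le> q / (1 - q)" using pq p1 q1 by (simp add: divide_simps)
    then have "real (m - j) / real (Suc j) * (p / (1 - p)) \<le> real (m - j) / real (Suc j) * (q / (1 - q))"
      by (intro mult_left_mono) auto
    then show ?thesis by (simp add: A_def A'_def)
  qed
  have P0: "bw m p j \<ge> 0" using p0 p1 by (intro bw_nonneg) auto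
  have "bw m p j * A \<le> bw m p j * A'" using AA P0 by (intro mult_left_mono)
  also have "\<dots> < bw m q j * A'" using lt A'0 by simp
  finally show ?thesis using eP eQ by simp
qed

lemma mlr:
  assumes p0: "0 < p" and q0: "p \<le> q" and q1: "q < 1"
    and "k \<le> k'" and "k' \<le> m" and lt: "bw m p k < bw m q k"
  shows "bw m p k' < bw m q k'"
  using assms(4,5)
proof (induction k' rule: dec_induct)
  case base show ?case by (rule lt)
next
  case (step j)
  then show ?case using mlr_step[OF p0 q0 q1, of j m] by simp
qed

lemma core:
  assumes p0: "0 < p" and p1: "p < 1" and V1: "real m * p * (1 - p) \<ge> 1"
    and q0: "p < q" and q1: "q \<le> 1"
  shows "(\<Sum>k\<le>m. \<bar>bw m p k - bw m q k\<bar>) \<ge> (1/350) * min (real m * (q - p) / sqrt (real m * p * (1 - p))) 1"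
proof -
  define V where "V = real m * p * (1 - p)"
  define t where "t = real m * (q - p) / sqrt V"
  have V1': "V \<ge> 1" using V1 by (simp add: V_def)
  have sV: "sqrt V > 0" "sqrt V * sqrt V = V" using V1' by auto
  have sVle: "sqrt V \<le> V"
  proof -
    have "1 \<le> sqrt V" using V1' by simp
    then have "sqrt V * 1 \<le> sqrt V * sqrt V" using sV by (intro mult_left_mono) auto
    then show ?thesis using sV by simp
  qed
  have m0: "real m > 0" using V1' p0 p1 by (cases "m = 0") (auto simp: V_def)
  have Vle2: "V \<le> real m * (1 - p)" using p0 p1 m0 by (simp add: V_def mult_left_le mult.commute mult.left_commute)
  have t0: "t \<ge> 0" using q0 m0 sV by (simp add: t_def)
  have absge: "(\<Sum>k\<le>m. \<bar>bw m p k - bw m q k\<bar>) \<ge> (\<Sum>k\<le>m. max (bw m q k - bw m p k) 0)"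
    by (rule sum_mono) auto
  show ?thesis
  proof (cases "t \<le> 1/24")
    case True
    have qlt: "q < 1"
    proof (rule ccontr)
      assume "\<not> q < 1"
      then have "q = 1" using q1 by simp
      then have "t = real m * (1 - p) / sqrt V" by (simp add: t_def)
      also have "\<dots> \<ge> 1" using sV sVle Vle2 by (simp add: field_simps)
      finally show False using True by simp
    qed
    have "(\<Sum>k\<le>m. max (bw m q k - bw m p k) 0) \<ge> t / 12"
      using step1[OF p0 p1 V1 q0 qlt] True sV unfolding t_def V_def by (simp add: field_simps)
    moreover have "(1/350) * min t 1 \<le> t / 12" using t0 by simp
    ultimately have "(1/350) * min t 1 \<le> (\<Sum>k\<le>m. \<bar>bw m p k - bw m q k\<bar>)" using absge by linarith
    then show ?thesis unfolding t_def V_def .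
  next
    case False
    define q' where "q' = p + sqrt V / (24 * real m)"
    have mq': "real m * (q' - p) = sqrt V / 24" using m0 by (simp add: q'_def)
    have q'q: "q' < q"
    proof -
      have "sqrt V / 24 < real m * (q - p)" using False sV by (simp add: t_def field_simps)
      then have "real m * (q' - p) < real m * (q - p)" using mq' by simp
      then show ?thesis using m0 by simp
    qed
    have pq': "p < q'" using sV m0 by (simp add: q'_def)
    have q'1: "q' < 1" using q'q q1 by simp
    have sm: "real m * (q' - p) \<le> sqrt (real m * p * (1 - p)) / 24" using mq' by (simp add: V_def)
    have S0: "(\<Sum>k\<le>m. max (bw m q' k - bw m p k) 0) \<ge> (real m * (q' - p) / sqrt V) / 12"
      using step1[OF p0 p1 V1 pq' q'1 sm] by (simp add: V_def)
    have "(real m * (q' - p) / sqrt V) / 12 = 1 / 288" unfolding mq' using sV by simp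
    then have S': "(\<Sum>k\<le>m. max (bw m q' k - bw m p k) 0) \<ge> 1 / 288" using S0 by linarith
    define f where "f k = (if k \<le> m then (if bw m p k < bw m q' k then 1 else 0) else (1::real))" for k
    have mf: "mono f"
    proof (rule monoI)
      fix k k' :: nat assume kk: "k \<le> k'"
      show "f k \<le> f k'"
      proof (cases "k' \<le> m")
        case True
        then show ?thesis using kk mlr[OF p0 _ q'1 kk True] pq' by (auto simp: f_def)
      next
        case False then show ?thesis by (auto simp: f_def)
      qed
    qed
    have e1: "(\<Sum>k\<le>m. max (bw m q' k - bw m p k) 0) = bE m q' f - bE m p f"
      unfolding bE_def sum_subtractf[symmetric] by (rule sum.cong) (auto simp: f_def algebra_simps max_def)
    have e2: "bE m q f - bE m p f \<le> (\<Sum>k\<le>m. max (bw m q k - bw m p k) 0)"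
      unfolding bE_def sum_subtractf[symmetric] by (rule sum_mono) (auto simp: f_def algebra_simps)
    have "bE m q' f \<le> bE m q f" using bE_param_mono[OF mf, of q' q m] pq' p0 q'q q1 by simp
    then have "(\<Sum>k\<le>m. \<bar>bw m p k - bw m q k\<bar>) \<ge> 1 / 288" using S' e1 e2 absge by linarith
    moreover have "(1/350) * min t 1 \<le> 1 / 288" by simp
    ultimately have "(1/350) * min t 1 \<le> (\<Sum>k\<le>m. \<bar>bw m p k - bw m q k\<bar>)" by linarith
    then show ?thesis unfolding t_def V_def .
  qed
qed

lemma bw_refl: "k \<le> m \<Longrightarrow> bw m (1 - r) (m - k) = bw m r k"
  unfolding bw_def by (simp add: binomial_symmetric[symmetric] algebra_simps)

lemma sum_refl: "(\<Sum>k\<le>m. \<bar>bw m (1 - p) k - bw m (1 - q) k\<bar>) = (\<Sum>k\<le>m. \<bar>bw m p k - bw m q k\<bar>)"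
proof -
  have "(\<Sum>k\<le>m. \<bar>bw m (1 - p) k - bw m (1 - q) k\<bar>) = (\<Sum>k\<le>m. \<bar>bw m (1 - p) (m - k) - bw m (1 - q) (m - k)\<bar>)"
    by (rule sum.reindex_bij_witness[where i="\<lambda>i. m - i" and j="\<lambda>i. m - i"]) auto
  also have "\<dots> = (\<Sum>k\<le>m. \<bar>bw m p k - bw m q k\<bar>)"
    by (rule sum.cong) (auto simp: bw_refl)
  finally show ?thesis .
qed

theorem lemma7:
  fixes c p q :: real and m :: nat
  assumes "c > 2" and "m \<ge> 3" and "0 \<le> p" and "p \<le> 1/2"
    and "real m * p \<ge> c" and "0 \<le> q" and "q \<le> 1"
  shows "l1_bin m p q \<ge> (1/350) * min (sqrt (real m) * \<bar>p - q\<bar> / sqrt (p * (1 - p))) 1"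
proof -
  have mp2: "real m * p \<ge> 2" using assms by linarith
  have p0: "0 < p" using mp2 assms(3) by (cases "p = 0") auto
  have p1: "p < 1" using assms by simp
  have V1: "real m * p * (1 - p) \<ge> 1"
  proof -
    have "real m * p * (1 - p) \<ge> 2 * (1/2)" using mp2 assms(4) by (intro mult_mono) auto
    then show ?thesis by simp
  qed
  have l1: "l1_bin m p q = (\<Sum>k\<le>m. \<bar>bw m p k - bw m q k\<bar>)"
    unfolding l1_bin_def bw_def using assms p1 by (simp add: pmf_binomial)
  have ex: "sqrt (real m) * \<bar>p - q\<bar> / sqrt (p * (1 - p)) = real m * \<bar>p - q\<bar> / sqrt (real m * p * (1 - p))"
  proof -
    have m0: "real m > 0" using assms by simp
    define a where "a = sqrt (real m)"
    define b where "b = sqrt (p * (1 - p))"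
    have a0: "a > 0" using m0 by (simp add: a_def)
    have b0: "b > 0" using p0 p1 by (simp add: b_def)
    have e1: "sqrt (real m * p * (1 - p)) = a * b" by (simp add: a_def b_def real_sqrt_mult mult.assoc)
    have e2: "real m = a * a" using m0 by (simp add: a_def)
    have "a * \<bar>p - q\<bar> / b = (a * a) * \<bar>p - q\<bar> / (a * b)" using a0 b0 by (simp add: field_simps)
    then show ?thesis unfolding e1 e2[symmetric] by (simp add: a_def b_def)
  qed
  show ?thesis
    unfolding l1 ex
  proof (cases "p < q")
    case True
    then show "(1/350) * min (real m * \<bar>p - q\<bar> / sqrt (real m * p * (1 - p))) 1 \<le> (\<Sum>k\<le>m. \<bar>bw m p k - bw m q k\<bar>)"
      using core[OF p0 p1 V1 True assms(7)] by simp
  next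
    case False
    show "(1/350) * min (real m * \<bar>p - q\<bar> / sqrt (real m * p * (1 - p))) 1 \<le> (\<Sum>k\<le>m. \<bar>bw m p k - bw m q k\<bar>)"
    proof (cases "q = p")
      case True
      then show ?thesis by (simp add: sum_nonneg)
    next
      case False
      then have qp: "1 - p < 1 - q" using \<open>\<not> p < q\<close> by simp
      have V1': "real m * (1 - p) * (1 - (1 - p)) \<ge> 1" using V1 by (simp add: algebra_simps)
      have C: "(1/350) * min (real m * ((1 - q) - (1 - p)) / sqrt (real m * (1 - p) * (1 - (1 - p)))) 1 \<le> (\<Sum>k\<le>m. \<bar>bw m (1 - p) k - bw m (1 - q) k\<bar>)"
        by (rule core) (use p0 p1 V1' qp assms(6) in auto)
      have E1: "real m * ((1 - q) - (1 - p)) = real m * \<bar>p - q\<bar>" using qp by simp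
      have E2: "real m * (1 - p) * (1 - (1 - p)) = real m * p * (1 - p)" by (simp add: algebra_simps)
      have "(1/350) * min (real m * \<bar>p - q\<bar> / sqrt (real m * p * (1 - p))) 1 \<le> (\<Sum>k\<le>m. \<bar>bw m (1 - p) k - bw m (1 - q) k\<bar>)"
        using C unfolding E1 E2 .
      then show ?thesis unfolding sum_refl .
    qed
  qed
qed

end
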